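(* Assume (A1) and (A2), and let $\alpha>0$ be arbitrary. Along every trajectory of the algorithm described in the context, for all $k\ge0$, $$V_x(k+1)-V_x(k)\le-\tfrac12\bm e_x(k)^T\bm e_x(k)+\alpha^2\max_ib_{3i}\big(\|\bm e_\psi(k)\|^2+\|\bm e_\xi(k)\|^2+N\|\bm e_{\bar x}(k)\|^2\big).$$
   Context: Game. $N$ coalitions; coalition $i$ has agents $i1,\dots,in_i$; $\mathcal V_i=\{i1,\dots,in_i\}$, $\mathcal V=\bigcup_i\mathcal V_i$, $n_{\mathrm{sum}}=\sum_in_i$; agents ordered lexicographically. Agent $ij$ has state $x_{ij}\in\mathbb{R}$; $\bm x_i=(x_{i1},\dots,x_{in_i})^T$, $\bm x=(\bm x_1^T,\dots,\bm x_N^T)^T$. Costs $f_{ij}:\mathbb{R}^{n_{\mathrm{sum}}}\to\mathbb{R}$, $f_i=\sum_jf_{ij}$. For $\bm y\in\mathbb{R}^N$, $g_i(\bm y)=f_i((y_1\mathbf 1_{n_1}^T,\dots,y_N\mathbf 1_{n_N}^T)^T)$; $\bm y^*$ is the Nash equilibrium of the game $\min_{y_i}g_i(\bm y)$, $i=1,\dots,N$, and $\bm x^*=(y_1^*\mathbf 1_{n_1}^T,\dots,y_N^*\mathbf 1_{n_N}^T)^T$ (so $\mathbf 1_{n_i}^T\frac{\partial f_i}{\partial\bm x_i}(\bm x^* )=0$ for all $i$). Graph. Directed graph $\mathcal G=(\mathcal V,\mathcal E)$, $(pq,ij)\in\mathcal E$ meaning $ij$ receives from $pq$. $a_{ij}^{pq}=1$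 if $(pq,ij)\in\mathcal E$, $pq\ne ij$, else $0$; $d_{ij}=\sum_{pq}a_{ij}^{pq}$. $\mathcal G_i$: subgraph induced on $\mathcal V_i$. $\mathcal N_{ij}^{\mathrm{in}}$, $\mathcal N_{ij}^{i\text{-in}}$, $\mathcal N_{ij}^{i\text{-out}}$: in-neighbors in $\mathcal G$, in-neighbors and out-neighbors in $\mathcal G_i$. Assumptions. (A1) $\mathcal G$ and every $\mathcal G_i$ are strongly connected. (A2) each $f_{ij}$ is convex, $C^2$, with $\nabla f_{ij}$ Lipschitz of constant $l_{ij}$. Algorithm. Weights $r_{ij}^{im}>0$ for $im\in\mathcal N_{ij}^{i\text{-in}}\cup\{ij\}$ summing to 1, $c_{im}^{ij}>0$ for $im\in\mathcal N_{ij}^{i\text{-out}}\cup\{ij\}$ summing to 1, other within-coalition weights $0$; $R_i=[r_{ij}^{im}]$, $C_i=[c_{ij}^{im}]$ ($j$ row, $m$ column). Step size $\alpha>0$. Initialization: $x_{ij}(0),\bm\xi_{ij}(0)\in\mathbb{R}^{n_{\mathrm{sum}}}$ arbitrary, $\psi_{ij}^{il}(0)=\frac{\partial f_{ij}}{\partial x_{il}}(\bm\xi_{ij}(0))$. For $k\ge0$: $x_{ij}(k+1)=\sum_mr_{ij}^{im}x_{im}(k)-\frac{\alpha}{n_i}\sum_{m=1}^{n_i}\psi_{ij}^{im}(k)$; $\xi_{ij}^{pq}(k+1)=\xi_{ij}^{pq}(k)-\frac1{d_{ij}+a_{ij}^{pq}}\big(\sum_{lm\in\mathcal N_{ij}^{\mathrm{in}}}(\xi_{ij}^{pq}(k)-\xi_{lm}^{pq}(k))+a_{ij}^{pq}(\xi_{ij}^{pq}(k)-x_{pq}(k))\big)$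 for all $pq\in\mathcal V$; $\psi_{ij}^{il}(k+1)=\sum_mc_{ij}^{im}\psi_{im}^{il}(k)+\frac{\partial f_{ij}}{\partial x_{il}}(\bm\xi_{ij}(k+1))-\frac{\partial f_{ij}}{\partial x_{il}}(\bm\xi_{ij}(k))$. Auxiliary quantities. $u_i$: $u_i^TR_i=u_i^T$, $u_i^T\mathbf 1=n_i$; $v_i$: $C_iv_i=v_i$, $\mathbf 1^Tv_i=n_i$. $\bar R_i=R_i-\frac{\mathbf 1u_i^T}{n_i}$, $\bar I_{u_i}=I_{n_i}-\frac{\mathbf 1u_i^T}{n_i}$; $W_{R_i}$: symmetric positive definite solution of $\bar R_i^TW\bar R_i-W=-I_{n_i}$. Spectral matrix norms. $b_{0i}=n_i+(\frac1{n_i}+\max_kn_k)\|v_i\|^2\sum_{j=1}^{n_i}l_{ij}^2$, $b_{3i}=\frac1{n_i^2}(2\|\bar R_i^TW_{R_i}\bar I_{u_i}\|^2+\|\bar I_{u_i}^TW_{R_i}\bar I_{u_i}\|)b_{0i}$. Errors and Lyapunov function. $\bm\psi_i=(\psi_{i1}^{i1},\dots,\psi_{i1}^{in_i},\psi_{i2}^{i1},\dots,\psi_{in_i}^{in_i})^T$, $\bar{\bm\psi}_i=\frac1{n_i}(\mathbf 1^T\otimes I_{n_i})\bm\psi_i$, $\bm e_{\psi_i}=\bm\psi_i-v_i\otimes\bar{\bm\psi}_i$. $\bar x_i=u_i^T\bm x_i/n_i$, $e_{\bar x_i}=\bar x_i-y_i^*$, $\bm e_{x_i}=\bm x_i-\mathbf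 1_{n_i}\bar x_i$, $\bar{\bm X}=(\bar x_1\mathbf 1_{n_1}^T,\dots,\bar x_N\mathbf 1_{n_N}^T)^T$. $\bm\xi_i=(\bm\xi_{i1}^T,\dots,\bm\xi_{in_i}^T)^T$, $\bm e_{\xi_i}=\bm\xi_i-\mathbf 1_{n_i}\otimes\bar{\bm X}$. $\bm e_\psi,\bm e_{\bar x},\bm e_x,\bm e_\xi$: stacks over $i$. $V_x(k)=\sum_{i=1}^N\bm e_{x_i}(k)^TW_{R_i}\bm e_{x_i}(k)$. *)

theory Defs
  imports "HOL-Analysis.Analysis"
begin

(* Agents form a finite type 'a; coalitions form a finite type 'c;
   coal a is the coalition of agent a.  R^{n_sum} = real^'a. *)

definition Vc :: "('a \<Rightarrow> 'c) \<Rightarrow> 'c \<Rightarrow> 'a set" where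
  "Vc coal i = {a. coal a = i}"

definition nc :: "('a \<Rightarrow> 'c) \<Rightarrow> 'c \<Rightarrow> nat" where
  "nc coal i = card (Vc coal i)"

(* graph: (pq, ij) \<in> E means ij receives from pq *)
definition adj :: "('a \<times> 'a) set \<Rightarrow> 'a \<Rightarrow> 'a \<Rightarrow> real" where
  "adj E ij pq = (if (pq, ij) \<in> E \<and> pq \<noteq> ij then 1 else 0)"

definition deg :: "('a::finite \<times> 'a) set \<Rightarrow> 'a \<Rightarrow> real" where
  "deg E ij = (\<Sum>pq\<in>UNIV. adj E ij pq)"

definition in_nbrs :: "('a \<times> 'a) set \<Rightarrow> 'a \<Rightarrow> 'a set" where
  "in_nbrs E ij = {pq. (pq, ij) \<in> E \<and> pq \<noteq> ij}"

definition strongly_connected_on :: "'a set \<Rightarrow> ('a \<times> 'a) set \<Rightarrow> bool" where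
  "strongly_connected_on S E \<longleftrightarrow> (\<forall>a\<in>S. \<forall>b\<in>S. (a, b) \<in> (E \<inter> (S \<times> S))\<^sup>*)"

definition grad :: "(real^'n \<Rightarrow> real) \<Rightarrow> real^'n \<Rightarrow> real^'n" where
  "grad f x = (THE D. GDERIV f x :> D)"

definition pderiv :: "(real^'n \<Rightarrow> real) \<Rightarrow> real^'n \<Rightarrow> 'n \<Rightarrow> real" where
  "pderiv f x q = grad f x $ q"

definition C2 :: "(real^'n \<Rightarrow> real) \<Rightarrow> bool" where
  "C2 f \<longleftrightarrow> (\<exists>G H. (\<forall>x. GDERIV f x :> G x) \<and>
      (\<forall>x. (G has_derivative blinfun_apply (H x)) (at x)) \<and> continuous_on UNIV H)"

definition grad_lipschitz :: "(real^'n \<Rightarrow> real) \<Rightarrow> real \<Rightarrow> bool" where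
  "grad_lipschitz f L \<longleftrightarrow> (\<forall>x y. norm (grad f x - grad f y) \<le> L * norm (x - y))"

definition stackc :: "('a::finite \<Rightarrow> 'c) \<Rightarrow> ('c \<Rightarrow> real) \<Rightarrow> real^'a" where
  "stackc coal y = (\<chi> a. y (coal a))"

definition gcost :: "('a::finite \<Rightarrow> 'c) \<Rightarrow> ('a \<Rightarrow> real^'a \<Rightarrow> real) \<Rightarrow> 'c \<Rightarrow> ('c \<Rightarrow> real) \<Rightarrow> real" where
  "gcost coal f i y = (\<Sum>a\<in>Vc coal i. f a (stackc coal y))"

definition nash_eq :: "('a::finite \<Rightarrow> 'c) \<Rightarrow> ('a \<Rightarrow> real^'a \<Rightarrow> real) \<Rightarrow> ('c \<Rightarrow> real) \<Rightarrow> bool" where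
  "nash_eq coal f ys \<longleftrightarrow> (\<forall>i z. gcost coal f i ys \<le> gcost coal f i (ys(i := z)))"

(* weights: r a m = r_{ij}^{im}  (row a, column m);  c a m = c_{ij}^{im} (row a, column m) *)
definition weights_R :: "('a \<Rightarrow> 'c) \<Rightarrow> ('a \<times> 'a) set \<Rightarrow> ('a \<Rightarrow> 'a \<Rightarrow> real) \<Rightarrow> bool" where
  "weights_R coal E r \<longleftrightarrow>
     (\<forall>a m. coal m = coal a \<longrightarrow>
        (((m, a) \<in> E \<or> m = a) \<longrightarrow> r a m > 0) \<and> (\<not> ((m, a) \<in> E \<or> m = a) \<longrightarrow> r a m = 0)) \<and>
     (\<forall>a. (\<Sum>m\<in>Vc coal (coal a). r a m) = 1)"

definition weights_C :: "('a \<Rightarrow> 'c) \<Rightarrow> ('a \<times> 'a) set \<Rightarrow> ('a \<Rightarrow> 'a \<Rightarrow> real) \<Rightarrow> bool" where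
  "weights_C coal E c \<longleftrightarrow>
     (\<forall>a m. coal m = coal a \<longrightarrow>
        (((m, a) \<in> E \<or> m = a) \<longrightarrow> c a m > 0) \<and> (\<not> ((m, a) \<in> E \<or> m = a) \<longrightarrow> c a m = 0)) \<and>
     (\<forall>m. (\<Sum>a\<in>Vc coal (coal m). c a m) = 1)"

(* trajectory of the algorithm:
   xs k $ a = x_a(k),  xi k a $ pq = xi_a^pq(k),  psi k a b = psi_a^b(k) (b in the coalition of a) *)
definition trajectory ::
  "('a::finite \<Rightarrow> 'c) \<Rightarrow> ('a \<times> 'a) set \<Rightarrow> ('a \<Rightarrow> 'a \<Rightarrow> real) \<Rightarrow> ('a \<Rightarrow> 'a \<Rightarrow> real) \<Rightarrow>
   ('a \<Rightarrow> real^'a \<Rightarrow> real) \<Rightarrow> real \<Rightarrow>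
   (nat \<Rightarrow> real^'a) \<Rightarrow> (nat \<Rightarrow> 'a \<Rightarrow> real^'a) \<Rightarrow> (nat \<Rightarrow> 'a \<Rightarrow> 'a \<Rightarrow> real) \<Rightarrow> bool" where
  "trajectory coal E r c f \<alpha> xs xi psi \<longleftrightarrow>
     (\<forall>a b. coal b = coal a \<longrightarrow> psi 0 a b = pderiv (f a) (xi 0 a) b) \<and>
     (\<forall>k a. xs (Suc k) $ a =
        (\<Sum>m\<in>Vc coal (coal a). r a m * xs k $ m)
        - \<alpha> / real (nc coal (coal a)) * (\<Sum>m\<in>Vc coal (coal a). psi k a m)) \<and>
     (\<forall>k a pq. xi (Suc k) a $ pq =
        xi k a $ pq - 1 / (deg E a + adj E a pq) *
          ((\<Sum>lm\<in>in_nbrs E a. xi k a $ pq - xi k lm $ pq) + adj E a pq * (xi k a $ pq - xs k $ pq))) \<and>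
     (\<forall>k a b. coal b = coal a \<longrightarrow> psi (Suc k) a b =
        (\<Sum>m\<in>Vc coal (coal a). c a m * psi k m b)
        + pderiv (f a) (xi (Suc k) a) b - pderiv (f a) (xi k a) b)"

(* auxiliary vectors / matrices, coalition-wise (entries indexed by agents of coalition i) *)
definition left_perron :: "('a \<Rightarrow> 'c) \<Rightarrow> ('a \<Rightarrow> 'a \<Rightarrow> real) \<Rightarrow> ('a \<Rightarrow> real) \<Rightarrow> bool" where
  "left_perron coal r u \<longleftrightarrow>
     (\<forall>m. (\<Sum>j\<in>Vc coal (coal m). u j * r j m) = u m) \<and>
     (\<forall>i. (\<Sum>j\<in>Vc coal i. u j) = real (nc coal i))"

definition right_perron :: "('a \<Rightarrow> 'c) \<Rightarrow> ('a \<Rightarrow> 'a \<Rightarrow> real) \<Rightarrow> ('a \<Rightarrow> real) \<Rightarrow> bool" where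
  "right_perron coal c v \<longleftrightarrow>
     (\<forall>j. (\<Sum>m\<in>Vc coal (coal j). c j m * v m) = v j) \<and>
     (\<forall>i. (\<Sum>j\<in>Vc coal i. v j) = real (nc coal i))"

definition Rbar :: "('a \<Rightarrow> 'c) \<Rightarrow> ('a \<Rightarrow> 'a \<Rightarrow> real) \<Rightarrow> ('a \<Rightarrow> real) \<Rightarrow> 'a \<Rightarrow> 'a \<Rightarrow> real" where
  "Rbar coal r u j m = r j m - u m / real (nc coal (coal j))"

definition Ibar :: "('a \<Rightarrow> 'c) \<Rightarrow> ('a \<Rightarrow> real) \<Rightarrow> 'a \<Rightarrow> 'a \<Rightarrow> real" where
  "Ibar coal u j m = (if j = m then 1 else 0) - u m / real (nc coal (coal j))"

definition lyap_sol :: "('a \<Rightarrow> 'c) \<Rightarrow> ('a \<Rightarrow> 'a \<Rightarrow> real) \<Rightarrow> ('a \<Rightarrow> real) \<Rightarrow> ('a \<Rightarrow> 'a \<Rightarrow> real) \<Rightarrow> bool" where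
  "lyap_sol coal r u W \<longleftrightarrow>
     (\<forall>i. \<forall>j\<in>Vc coal i. \<forall>m\<in>Vc coal i. W j m = W m j) \<and>
     (\<forall>i z. (\<exists>j\<in>Vc coal i. z j \<noteq> 0) \<longrightarrow>
        (\<Sum>j\<in>Vc coal i. \<Sum>m\<in>Vc coal i. z j * W j m * z m) > 0) \<and>
     (\<forall>i. \<forall>j\<in>Vc coal i. \<forall>m\<in>Vc coal i.
        (\<Sum>p\<in>Vc coal i. \<Sum>q\<in>Vc coal i. Rbar coal r u p j * W p q * Rbar coal r u q m) - W j m
          = - (if j = m then 1 else 0))"

definition specnorm :: "'a set \<Rightarrow> ('a \<Rightarrow> 'a \<Rightarrow> real) \<Rightarrow> real" where
  "specnorm S M = Sup {sqrt (\<Sum>p\<in>S. (\<Sum>q\<in>S. M p q * z q)\<^sup>2) | z. (\<Sum>q\<in>S. (z q)\<^sup>2) \<le> 1}"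

definition tmul3 :: "'a set \<Rightarrow> ('a \<Rightarrow> 'a \<Rightarrow> real) \<Rightarrow> ('a \<Rightarrow> 'a \<Rightarrow> real) \<Rightarrow> ('a \<Rightarrow> 'a \<Rightarrow> real) \<Rightarrow> 'a \<Rightarrow> 'a \<Rightarrow> real" where
  "tmul3 S A B C j m = (\<Sum>p\<in>S. \<Sum>q\<in>S. A p j * B p q * C q m)"

definition b0 :: "('a \<Rightarrow> 'c::finite) \<Rightarrow> ('a \<Rightarrow> real) \<Rightarrow> ('a \<Rightarrow> real) \<Rightarrow> 'c \<Rightarrow> real" where
  "b0 coal v l i = real (nc coal i)
     + (1 / real (nc coal i) + real (Max (range (nc coal))))
       * (\<Sum>j\<in>Vc coal i. (v j)\<^sup>2) * (\<Sum>j\<in>Vc coal i. (l j)\<^sup>2)"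

definition b3 :: "('a \<Rightarrow> 'c::finite) \<Rightarrow> ('a \<Rightarrow> 'a \<Rightarrow> real) \<Rightarrow> ('a \<Rightarrow> real) \<Rightarrow> ('a \<Rightarrow> real) \<Rightarrow>
                  ('a \<Rightarrow> 'a \<Rightarrow> real) \<Rightarrow> ('a \<Rightarrow> real) \<Rightarrow> 'c \<Rightarrow> real" where
  "b3 coal r u v W l i = 1 / (real (nc coal i))\<^sup>2 *
     (2 * (specnorm (Vc coal i) (tmul3 (Vc coal i) (Rbar coal r u) W (Ibar coal u)))\<^sup>2
      + specnorm (Vc coal i) (tmul3 (Vc coal i) (Ibar coal u) W (Ibar coal u))) * b0 coal v l i"

definition xbar :: "('a::finite \<Rightarrow> 'c) \<Rightarrow> ('a \<Rightarrow> real) \<Rightarrow> real^'a \<Rightarrow> 'c \<Rightarrow> real" where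
  "xbar coal u x i = (\<Sum>j\<in>Vc coal i. u j * x $ j) / real (nc coal i)"

definition psibar :: "('a \<Rightarrow> 'c) \<Rightarrow> ('a \<Rightarrow> 'a \<Rightarrow> real) \<Rightarrow> 'a \<Rightarrow> real" where
  "psibar coal ps l = (\<Sum>j\<in>Vc coal (coal l). ps j l) / real (nc coal (coal l))"

definition e_psi_sq :: "('a::finite \<Rightarrow> 'c) \<Rightarrow> ('a \<Rightarrow> real) \<Rightarrow> ('a \<Rightarrow> 'a \<Rightarrow> real) \<Rightarrow> real" where
  "e_psi_sq coal v ps = (\<Sum>j\<in>UNIV. \<Sum>l\<in>Vc coal (coal j). (ps j l - v j * psibar coal ps l)\<^sup>2)"

definition e_xbar_sq :: "('a::finite \<Rightarrow> 'c::finite) \<Rightarrow> ('a \<Rightarrow> real) \<Rightarrow> real^'a \<Rightarrow> ('c \<Rightarrow> real) \<Rightarrow> real" where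
  "e_xbar_sq coal u x ys = (\<Sum>i\<in>UNIV. (xbar coal u x i - ys i)\<^sup>2)"

definition e_x :: "('a::finite \<Rightarrow> 'c) \<Rightarrow> ('a \<Rightarrow> real) \<Rightarrow> real^'a \<Rightarrow> 'a \<Rightarrow> real" where
  "e_x coal u x j = x $ j - xbar coal u x (coal j)"

definition e_xi_sq :: "('a::finite \<Rightarrow> 'c) \<Rightarrow> ('a \<Rightarrow> real) \<Rightarrow> real^'a \<Rightarrow> ('a \<Rightarrow> real^'a) \<Rightarrow> real" where
  "e_xi_sq coal u x xs = (\<Sum>j\<in>UNIV. \<Sum>pq\<in>UNIV. (xs j $ pq - xbar coal u x (coal pq))\<^sup>2)"

definition Vx :: "('a::finite \<Rightarrow> 'c::finite) \<Rightarrow> ('a \<Rightarrow> real) \<Rightarrow> ('a \<Rightarrow> 'a \<Rightarrow> real) \<Rightarrow> real^'a \<Rightarrow> real" where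
  "Vx coal u W x = (\<Sum>i\<in>UNIV. \<Sum>j\<in>Vc coal i. \<Sum>m\<in>Vc coal i. e_x coal u x j * W j m * e_x coal u x m)"

end

theory Submission
  imports Defs
begin

definition mv :: "'a set \<Rightarrow> ('a \<Rightarrow> 'a \<Rightarrow> real) \<Rightarrow> ('a \<Rightarrow> real) \<Rightarrow> 'a \<Rightarrow> real" where
  "mv S A z j = (\<Sum>m\<in>S. A j m * z m)"
definition bil :: "'a set \<Rightarrow> ('a \<Rightarrow> 'a \<Rightarrow> real) \<Rightarrow> ('a \<Rightarrow> real) \<Rightarrow> ('a \<Rightarrow> real) \<Rightarrow> real" where
  "bil S W x y = (\<Sum>j\<in>S. \<Sum>m\<in>S. x j * W j m * y m)"
definition sqs :: "'a set \<Rightarrow> ('a \<Rightarrow> real) \<Rightarrow> real" where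
  "sqs S z = (\<Sum>j\<in>S. (z j)\<^sup>2)"

lemma bil_mv: "bil S W (mv S A x) (mv S C y) = bil S (tmul3 S A W C) x y"
proof -
  have "bil S W (mv S A x) (mv S C y) = (\<Sum>p\<in>S. \<Sum>q\<in>S. \<Sum>j\<in>S. \<Sum>m\<in>S. x j * (A p j * W p q * C q m) * y m)"
    unfolding bil_def mv_def by (simp add: sum_distrib_left sum_distrib_right mult_ac)
  also have "\<dots> = (\<Sum>p\<in>S. \<Sum>j\<in>S. \<Sum>q\<in>S. \<Sum>m\<in>S. x j * (A p j * W p q * C q m) * y m)"
    by (rule sum.cong[OF refl], rule sum.swap)
  also have "\<dots> = (\<Sum>j\<in>S. \<Sum>p\<in>S. \<Sum>q\<in>S. \<Sum>m\<in>S. x j * (A p j * W p q * C q m) * y m)"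
    by (rule sum.swap)
  also have "\<dots> = (\<Sum>j\<in>S. \<Sum>p\<in>S. \<Sum>m\<in>S. \<Sum>q\<in>S. x j * (A p j * W p q * C q m) * y m)"
    by (rule sum.cong[OF refl], rule sum.cong[OF refl], rule sum.swap)
  also have "\<dots> = (\<Sum>j\<in>S. \<Sum>m\<in>S. \<Sum>p\<in>S. \<Sum>q\<in>S. x j * (A p j * W p q * C q m) * y m)"
    by (rule sum.cong[OF refl], rule sum.swap)
  also have "\<dots> = bil S (tmul3 S A W C) x y"
    unfolding bil_def tmul3_def by (simp add: sum_distrib_left sum_distrib_right mult_ac)
  finally show ?thesis .
qed

lemma bil_cong:
  assumes "\<And>j. j \<in> S \<Longrightarrow> x j = x' j" "\<And>j. j \<in> S \<Longrightarrow> y j = y' j"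
  shows "bil S W x y = bil S W x' y'"
  unfolding bil_def using assms by (intro sum.cong refl) auto

lemma bil_diff_left: "bil S W (\<lambda>j. x j - c * y j) z = bil S W x z - c * bil S W y z"
  unfolding bil_def by (simp add: algebra_simps sum_subtractf sum_distrib_left)

lemma bil_diff_right: "bil S W z (\<lambda>j. x j - c * y j) = bil S W z x - c * bil S W z y"
  unfolding bil_def by (simp add: algebra_simps sum_subtractf sum_distrib_left)

lemma bil_sym:
  assumes "\<And>j m. j \<in> S \<Longrightarrow> m \<in> S \<Longrightarrow> W j m = W m j"
  shows "bil S W x y = bil S W y x"
proof -
  have "bil S W x y = (\<Sum>m\<in>S. \<Sum>j\<in>S. x j * W j m * y m)"
    unfolding bil_def by (rule sum.swap)
  also have "\<dots> = bil S W y x"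
    unfolding bil_def using assms by (intro sum.cong refl) (simp add: mult_ac)
  finally show ?thesis .
qed

lemma bil_as_mv: "bil S M x y = (\<Sum>j\<in>S. x j * mv S M y j)"
  unfolding bil_def mv_def by (simp add: sum_distrib_left mult_ac)

lemma sqs_nonneg: "0 \<le> sqs S z"
  unfolding sqs_def by (simp add: sum_nonneg)

lemma CS_abs: "\<bar>\<Sum>j\<in>S. x j * z j\<bar> \<le> sqrt (sqs S x) * sqrt (sqs S z)"
proof -
  have "(\<Sum>j\<in>S. x j * z j)\<^sup>2 \<le> sqs S x * sqs S z"
    unfolding sqs_def by (rule Cauchy_Schwarz_ineq_sum)
  hence "sqrt ((\<Sum>j\<in>S. x j * z j)\<^sup>2) \<le> sqrt (sqs S x * sqs S z)"
    by (rule real_sqrt_le_mono)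
  thus ?thesis by (simp add: real_sqrt_mult)
qed

lemma specnorm_props:
  fixes M :: "'a \<Rightarrow> 'a \<Rightarrow> real"
  assumes fin: "finite S"
  shows "0 \<le> specnorm S M" "sqs S (mv S M z) \<le> (specnorm S M)\<^sup>2 * sqs S z"
proof -
  define Z where "Z = {sqrt (\<Sum>p\<in>S. (\<Sum>q\<in>S. M p q * z q)\<^sup>2) | z. (\<Sum>q\<in>S. (z q)\<^sup>2) \<le> 1}"
  have sn: "specnorm S M = Sup Z" unfolding specnorm_def Z_def by simp
  define B where "B = sqrt (\<Sum>p\<in>S. (\<Sum>q\<in>S. \<bar>M p q\<bar>)\<^sup>2)"
  have bdd: "bdd_above Z"
  proof (rule bdd_aboveI[of _ B])
    fix t assume "t \<in> Z"
    then obtain w where t: "t = sqrt (\<Sum>p\<in>S. (\<Sum>q\<in>S. M p q * w q)\<^sup>2)"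
      and w: "(\<Sum>q\<in>S. (w q)\<^sup>2) \<le> 1" unfolding Z_def by blast
    have wq: "\<bar>w q\<bar> \<le> 1" if "q \<in> S" for q
    proof -
      have "(w q)\<^sup>2 \<le> (\<Sum>q\<in>S. (w q)\<^sup>2)"
        using fin that by (intro member_le_sum) auto
      hence "(w q)\<^sup>2 \<le> 1" using w by linarith
      thus ?thesis by (simp add: abs_square_le_1)
    qed
    have "(\<Sum>q\<in>S. M p q * w q)\<^sup>2 \<le> (\<Sum>q\<in>S. \<bar>M p q\<bar>)\<^sup>2" for p
    proof -
      have "\<bar>\<Sum>q\<in>S. M p q * w q\<bar> \<le> (\<Sum>q\<in>S. \<bar>M p q * w q\<bar>)" by (rule sum_abs)
      also have "\<dots> \<le> (\<Sum>q\<in>S. \<bar>M p q\<bar>)"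
        using wq by (intro sum_mono) (simp add: abs_mult mult_left_le)
      finally have "\<bar>\<Sum>q\<in>S. M p q * w q\<bar> \<le> \<bar>\<Sum>q\<in>S. \<bar>M p q\<bar>\<bar>" by simp
      thus ?thesis by (metis abs_ge_zero power2_abs power_mono)
    qed
    hence "(\<Sum>p\<in>S. (\<Sum>q\<in>S. M p q * w q)\<^sup>2) \<le> (\<Sum>p\<in>S. (\<Sum>q\<in>S. \<bar>M p q\<bar>)\<^sup>2)"
      by (intro sum_mono)
    thus "t \<le> B" unfolding t B_def by (rule real_sqrt_le_mono)
  qed
  have upper: "sqrt (\<Sum>p\<in>S. (\<Sum>q\<in>S. M p q * w q)\<^sup>2) \<le> specnorm S M"
    if "(\<Sum>q\<in>S. (w q)\<^sup>2) \<le> 1" for w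
    unfolding sn by (rule cSup_upper[OF _ bdd]) (use that in \<open>auto simp: Z_def\<close>)
  have "sqrt (\<Sum>p\<in>S. (\<Sum>q\<in>S. M p q * (0::real))\<^sup>2) \<le> specnorm S M"
    by (rule upper) simp
  thus nn: "0 \<le> specnorm S M" by simp
  show "sqs S (mv S M z) \<le> (specnorm S M)\<^sup>2 * sqs S z"
  proof (cases "sqs S z = 0")
    case True
    hence "\<forall>q\<in>S. (z q)\<^sup>2 = 0" unfolding sqs_def using fin
      by (subst sum_nonneg_eq_0_iff[symmetric]) auto
    hence "\<forall>p. mv S M z p = 0" unfolding mv_def by simp
    thus ?thesis using True by (simp add: sqs_def)
  next
    case False
    define t where "t = sqs S z"
    have tpos: "t > 0" using False sqs_nonneg[of S z] unfolding t_def by linarith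
    define w where "w q = z q / sqrt t" for q
    have "(\<Sum>q\<in>S. (w q)\<^sup>2) = (\<Sum>q\<in>S. (z q)\<^sup>2) / t"
      unfolding w_def using tpos by (simp add: power_divide sum_divide_distrib)
    also have "\<dots> = 1" using tpos unfolding t_def sqs_def by simp
    finally have "sqrt (\<Sum>p\<in>S. (\<Sum>q\<in>S. M p q * w q)\<^sup>2) \<le> specnorm S M"
      by (intro upper) simp
    moreover have "(\<Sum>p\<in>S. (\<Sum>q\<in>S. M p q * w q)\<^sup>2) = sqs S (mv S M z) / t"
      unfolding w_def sqs_def mv_def using tpos
      by (simp add: power_divide sum_divide_distrib[symmetric] times_divide_eq_right)
    ultimately have "sqrt (sqs S (mv S M z) / t) \<le> specnorm S M" by simp
    hence "(sqrt (sqs S (mv S M z) / t))\<^sup>2 \<le> (specnorm S M)\<^sup>2"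
      using tpos sqs_nonneg[of S "mv S M z"] by (intro power_mono) auto
    hence "sqs S (mv S M z) / t \<le> (specnorm S M)\<^sup>2"
      using tpos sqs_nonneg[of S "mv S M z"] by simp
    thus ?thesis using tpos unfolding t_def by (simp add: divide_le_eq)
  qed
qed

lemma bil_bound:
  assumes "finite S"
  shows "\<bar>bil S M x y\<bar> \<le> sqrt (sqs S x) * specnorm S M * sqrt (sqs S y)"
proof -
  have "\<bar>bil S M x y\<bar> \<le> sqrt (sqs S x) * sqrt (sqs S (mv S M y))"
    unfolding bil_as_mv by (rule CS_abs)
  also have "sqrt (sqs S (mv S M y)) \<le> specnorm S M * sqrt (sqs S y)"
  proof -
    have "sqrt (sqs S (mv S M y)) \<le> sqrt ((specnorm S M)\<^sup>2 * sqs S y)"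
      using specnorm_props(2)[OF assms] by (rule real_sqrt_le_mono)
    thus ?thesis using specnorm_props(1)[OF assms] by (simp add: real_sqrt_mult)
  qed
  hence "sqrt (sqs S x) * sqrt (sqs S (mv S M y)) \<le> sqrt (sqs S x) * (specnorm S M * sqrt (sqs S y))"
    by (intro mult_left_mono) (auto simp: sqs_nonneg)
  finally show ?thesis by (simp add: mult_ac)
qed

lemma bil_lyap:
  assumes "\<And>j m. j \<in> S \<Longrightarrow> m \<in> S \<Longrightarrow> tmul3 S R W R j m - W j m = - (if j = m then 1 else 0)"
    and fin: "finite S"
  shows "bil S (tmul3 S R W R) e e = bil S W e e - sqs S e"
proof -
  have "bil S (tmul3 S R W R) e e = (\<Sum>j\<in>S. \<Sum>m\<in>S. e j * W j m * e m - (if j = m then e j * e m else 0))"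
    unfolding bil_def
  proof (intro sum.cong refl)
    fix j m assume "j \<in> S" "m \<in> S"
    then have h: "tmul3 S R W R j m = W j m - (if j = m then 1 else 0)" using assms(1) by force
    show "e j * tmul3 S R W R j m * e m = e j * W j m * e m - (if j = m then e j * e m else 0)"
      unfolding h by (cases "j = m") (simp_all add: algebra_simps)
  qed
  also have "\<dots> = bil S W e e - (\<Sum>j\<in>S. \<Sum>m\<in>S. (if j = m then e j * e m else 0))"
    unfolding bil_def by (simp add: sum_subtractf)
  also have "(\<Sum>j\<in>S. \<Sum>m\<in>S. (if j = m then e j * e m else 0)) = sqs S e"
    unfolding sqs_def using fin by (intro sum.cong refl) (simp add: power2_eq_square)
  finally show ?thesis .
qed

lemma young_aux:
  fixes a b c n :: real
  shows "2 * c * (a * n * b) \<le> (1/2) * a\<^sup>2 + 2 * c\<^sup>2 * n\<^sup>2 * b\<^sup>2"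
proof -
  have "0 \<le> (a - 2 * c * n * b)\<^sup>2" by simp
  thus ?thesis by (simp add: power2_eq_square algebra_simps)
qed

lemma step_quad:
  fixes W R I :: "'a \<Rightarrow> 'a \<Rightarrow> real" and e e' s :: "'a \<Rightarrow> real" and \<beta> :: real
  assumes fin: "finite S"
    and sym: "\<And>j m. j \<in> S \<Longrightarrow> m \<in> S \<Longrightarrow> W j m = W m j"
    and lyap: "\<And>j m. j \<in> S \<Longrightarrow> m \<in> S \<Longrightarrow> tmul3 S R W R j m - W j m = - (if j = m then 1 else 0)"
    and e': "\<And>j. j \<in> S \<Longrightarrow> e' j = mv S R e j - \<beta> * mv S I s j"
  shows "bil S W e' e' - bil S W e e \<le> - (1/2) * sqs S e
     + \<beta>\<^sup>2 * (2 * (specnorm S (tmul3 S R W I))\<^sup>2 + specnorm S (tmul3 S I W I)) * sqs S s"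
proof -
  let ?a = "mv S R e" and ?b = "mv S I s"
  define X where "X = bil S (tmul3 S R W I) e s"
  define Y where "Y = bil S (tmul3 S I W I) s s"
  define nM where "nM = specnorm S (tmul3 S R W I)"
  define nQ where "nQ = specnorm S (tmul3 S I W I)"
  have "bil S W e' e' = bil S W (\<lambda>j. ?a j - \<beta> * ?b j) (\<lambda>j. ?a j - \<beta> * ?b j)"
    using e' by (intro bil_cong) auto
  also have "\<dots> = bil S W ?a ?a - \<beta> * bil S W ?a ?b - \<beta> * (bil S W ?b ?a - \<beta> * bil S W ?b ?b)"
    by (simp add: bil_diff_left bil_diff_right)
  also have "bil S W ?b ?a = bil S W ?a ?b" using sym by (rule bil_sym)
  also have "bil S W ?a ?a = bil S W e e - sqs S e"
    unfolding bil_mv using lyap fin by (rule bil_lyap)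
  also have "bil S W ?a ?b = X" unfolding X_def bil_mv ..
  also have "bil S W ?b ?b = Y" unfolding Y_def bil_mv ..
  finally have eq: "bil S W e' e' - bil S W e e = - sqs S e - 2 * \<beta> * X + \<beta>\<^sup>2 * Y"
    by (simp add: algebra_simps power2_eq_square)
  define a where "a = sqrt (sqs S e)"
  define b where "b = sqrt (sqs S s)"
  have a2: "a\<^sup>2 = sqs S e" unfolding a_def using sqs_nonneg by simp
  have b2: "b\<^sup>2 = sqs S s" unfolding b_def using sqs_nonneg by simp
  have a0: "a \<ge> 0" "b \<ge> 0" unfolding a_def b_def by (auto simp: sqs_nonneg)
  have nn: "nM \<ge> 0" "nQ \<ge> 0" unfolding nM_def nQ_def using specnorm_props(1)[OF fin] by auto
  have Xb: "\<bar>X\<bar> \<le> a * nM * b" unfolding X_def a_def b_def nM_def by (rule bil_bound[OF fin])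
  have Yb: "Y \<le> b * nQ * b" unfolding Y_def b_def nQ_def
    by (rule order_trans[OF abs_ge_self bil_bound[OF fin]])
  have "- 2 * \<beta> * X \<le> 2 * \<bar>\<beta>\<bar> * (a * nM * b)"
  proof -
    have "- 2 * \<beta> * X \<le> 2 * \<bar>\<beta>\<bar> * \<bar>X\<bar>" by (simp add: abs_mult[symmetric] abs_le_iff)
    also have "\<dots> \<le> 2 * \<bar>\<beta>\<bar> * (a * nM * b)" using Xb by (intro mult_left_mono) auto
    finally show ?thesis .
  qed
  also have "\<dots> \<le> (1/2) * a\<^sup>2 + 2 * \<bar>\<beta>\<bar>\<^sup>2 * nM\<^sup>2 * b\<^sup>2"
    by (rule young_aux)
  finally have c1: "- 2 * \<beta> * X \<le> (1/2) * a\<^sup>2 + 2 * \<beta>\<^sup>2 * nM\<^sup>2 * b\<^sup>2" by simp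
  have c2: "\<beta>\<^sup>2 * Y \<le> \<beta>\<^sup>2 * (nQ * b\<^sup>2)"
    using Yb by (intro mult_left_mono) (auto simp: power2_eq_square mult_ac)
  show ?thesis unfolding eq nM_def[symmetric] nQ_def[symmetric]
    using c1 c2 a2 b2 by (simp add: algebra_simps)
qed

lemma young_eps:
  fixes x y \<epsilon> :: real
  assumes "\<epsilon> > 0"
  shows "(x + y)\<^sup>2 \<le> (1 + \<epsilon>) * x\<^sup>2 + (1 + 1/\<epsilon>) * y\<^sup>2"
proof -
  have "0 \<le> (\<epsilon> * x - y)\<^sup>2" by simp
  hence "2 * \<epsilon> * x * y \<le> \<epsilon>\<^sup>2 * x\<^sup>2 + y\<^sup>2" by (simp add: power2_eq_square algebra_simps)
  hence "2 * x * y \<le> \<epsilon> * x\<^sup>2 + y\<^sup>2 / \<epsilon>" using assms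
    by (simp add: field_simps power2_eq_square)
  thus ?thesis by (simp add: power2_eq_square algebra_simps add_divide_distrib)
qed

lemma sum_sq_card:
  fixes E :: "'b \<Rightarrow> real"
  shows "(\<Sum>m\<in>S. E m)\<^sup>2 \<le> real (card S) * (\<Sum>m\<in>S. (E m)\<^sup>2)"
  using Cauchy_Schwarz_ineq_sum[of "\<lambda>_. 1::real" E S] by simp

lemma sbound_combine:
  fixes A v s :: "'a \<Rightarrow> real" and T n K P X :: real
  assumes fin: "finite S" and n: "n > 0"
    and s: "\<And>j. j \<in> S \<Longrightarrow> s j = A j + v j * T"
    and hA: "sqs S A \<le> n * P" and hT: "T\<^sup>2 * sqs S v \<le> K * X"
    and K: "K \<ge> 0" and P: "P \<ge> 0" and X: "X \<ge> 0"
  shows "sqs S s \<le> (n + K) * (P + X)"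
proof (cases "K = 0")
  case True
  have "0 \<le> T\<^sup>2 * sqs S v" using sqs_nonneg[of S v] by simp
  hence "T\<^sup>2 * sqs S v = 0" using hT True by simp
  hence vT: "v j * T = 0" if "j \<in> S" for j
  proof (cases "T = 0")
    case False
    with \<open>T\<^sup>2 * sqs S v = 0\<close> have "sqs S v = 0" by simp
    hence "\<forall>j\<in>S. (v j)\<^sup>2 = 0" unfolding sqs_def using fin
      by (subst sum_nonneg_eq_0_iff[symmetric]) auto
    thus ?thesis using that by simp
  qed simp
  have "sqs S s = sqs S A" unfolding sqs_def using s vT by (intro sum.cong refl) auto
  also have "\<dots> \<le> n * P" by fact
  also have "\<dots> \<le> (n + K) * (P + X)" using True n P X by (simp add: mult_left_mono)
  finally show ?thesis .
next
  case False
  hence Kp: "K > 0" using K by simp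
  define \<epsilon> where "\<epsilon> = K / n"
  have ep: "\<epsilon> > 0" unfolding \<epsilon>_def using Kp n by simp
  have "sqs S s \<le> (\<Sum>j\<in>S. (1 + \<epsilon>) * (A j)\<^sup>2 + (1 + 1/\<epsilon>) * (v j * T)\<^sup>2)"
    unfolding sqs_def using s young_eps[OF ep] by (intro sum_mono) auto
  also have "\<dots> = (1 + \<epsilon>) * sqs S A + (1 + 1/\<epsilon>) * (T\<^sup>2 * sqs S v)"
    unfolding sqs_def by (simp add: sum.distrib sum_distrib_left power_mult_distrib mult_ac)
  also have "\<dots> \<le> (1 + \<epsilon>) * (n * P) + (1 + 1/\<epsilon>) * (K * X)"
    using hA hT ep by (intro add_mono mult_left_mono) auto
  also have "\<dots> = (n + K) * (P + X)"
    unfolding \<epsilon>_def using n Kp by (simp add: field_simps)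
  finally show ?thesis .
qed

lemma sum_sq_bound:
  fixes d a b :: "'b \<Rightarrow> real" and c :: real
  assumes c: "c \<ge> 0" and h: "\<And>j. j \<in> S \<Longrightarrow> (d j)\<^sup>2 \<le> c * (a j)\<^sup>2 * (b j)\<^sup>2"
  shows "(\<Sum>j\<in>S. d j)\<^sup>2 \<le> c * (\<Sum>j\<in>S. (a j)\<^sup>2) * (\<Sum>j\<in>S. (b j)\<^sup>2)"
proof -
  have dj: "\<bar>d j\<bar> \<le> (sqrt c * \<bar>a j\<bar>) * \<bar>b j\<bar>" if "j \<in> S" for j
  proof -
    have "sqrt ((d j)\<^sup>2) \<le> sqrt (c * (a j)\<^sup>2 * (b j)\<^sup>2)" using h[OF that] by (rule real_sqrt_le_mono)
    thus ?thesis by (simp add: real_sqrt_mult)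
  qed
  have "\<bar>\<Sum>j\<in>S. d j\<bar> \<le> (\<Sum>j\<in>S. \<bar>d j\<bar>)" by (rule sum_abs)
  also have "\<dots> \<le> (\<Sum>j\<in>S. (sqrt c * \<bar>a j\<bar>) * \<bar>b j\<bar>)" using dj by (intro sum_mono) auto
  finally have "\<bar>\<Sum>j\<in>S. d j\<bar> \<le> \<bar>\<Sum>j\<in>S. (sqrt c * \<bar>a j\<bar>) * \<bar>b j\<bar>\<bar>" by simp
  hence "(\<Sum>j\<in>S. d j)\<^sup>2 \<le> (\<Sum>j\<in>S. (sqrt c * \<bar>a j\<bar>) * \<bar>b j\<bar>)\<^sup>2"
    by (metis abs_ge_zero power2_abs power_mono)
  also have "\<dots> \<le> (\<Sum>j\<in>S. (sqrt c * \<bar>a j\<bar>)\<^sup>2) * (\<Sum>j\<in>S. (\<bar>b j\<bar>)\<^sup>2)"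
    by (rule Cauchy_Schwarz_ineq_sum)
  also have "\<dots> = c * (\<Sum>j\<in>S. (a j)\<^sup>2) * (\<Sum>j\<in>S. (b j)\<^sup>2)"
    using c by (simp add: power_mult_distrib sum_distrib_left)
  finally show ?thesis .
qed

lemma gderiv_unique:
  fixes f :: "real^'n \<Rightarrow> real"
  assumes "GDERIV f x :> D" "GDERIV f x :> D'"
  shows "D = D'"
proof -
  have "(\<lambda>h. inner h D) = (\<lambda>h. inner h D')"
    using assms unfolding gderiv_def by (rule has_derivative_unique)
  hence "inner (D - D') D = inner (D - D') D'" by metis
  hence "inner (D - D') (D - D') = 0" by (simp add: inner_diff_right)
  thus ?thesis by simp
qed

lemma grad_C2:
  assumes "C2 f"
  shows "GDERIV f x :> grad f x"
proof -
  from assms obtain G where G: "\<And>x. GDERIV f x :> G x" unfolding C2_def by blast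
  have "(THE D. GDERIV f x :> D) = G x"
    by (rule the_equality) (use G gderiv_unique in blast)+
  hence "grad f x = G x" unfolding grad_def .
  thus ?thesis using G by simp
qed

lemma sum_group_coal:
  fixes coal :: "'a::finite \<Rightarrow> 'c::finite"
  shows "(\<Sum>j\<in>UNIV. F j) = (\<Sum>i\<in>UNIV. \<Sum>j\<in>Vc coal i. F j)"
  using sum.group[of "UNIV::'a set" "UNIV::'c set" coal F] by (simp add: Vc_def)

lemma nash_grad:
  fixes coal :: "'a::finite \<Rightarrow> 'c::finite" and f :: "'a \<Rightarrow> real^'a \<Rightarrow> real" and ys
  assumes NE: "nash_eq coal f ys" and C2: "\<And>a. C2 (f a)"
  shows "(\<Sum>a\<in>Vc coal i. \<Sum>m\<in>Vc coal i. grad (f a) (stackc coal ys) $ m) = 0"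
proof -
  define x0 where "x0 = stackc coal ys"
  define ind :: "real^'a" where "ind = (\<chi> a. if coal a = i then 1 else 0)"
  have st: "stackc coal (ys(i := z)) = x0 + (z - ys i) *\<^sub>R ind" for z
    unfolding x0_def ind_def stackc_def by (auto simp: vec_eq_iff)
  have lin: "((\<lambda>z. x0 + (z - ys i) *\<^sub>R ind) has_derivative (\<lambda>t. t *\<^sub>R ind)) (at (ys i))"
    by (auto intro!: derivative_eq_intros)
  have der_a: "((\<lambda>z. f a (x0 + (z - ys i) *\<^sub>R ind)) has_field_derivative (inner ind (grad (f a) x0))) (at (ys i))" for a
  proof -
    have g: "(f a has_derivative (\<lambda>h. inner h (grad (f a) x0))) (at (x0 + (ys i - ys i) *\<^sub>R ind))"
      using grad_C2[OF C2, of a x0] unfolding gderiv_def by simp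
    have "((\<lambda>z. f a (x0 + (z - ys i) *\<^sub>R ind)) has_derivative (\<lambda>t. inner (t *\<^sub>R ind) (grad (f a) x0))) (at (ys i))"
      by (rule has_derivative_compose[OF lin g])
    moreover have "(\<lambda>t. inner (t *\<^sub>R ind) (grad (f a) x0)) = (*) (inner ind (grad (f a) x0))"
      by (auto simp: mult.commute)
    ultimately show ?thesis unfolding has_field_derivative_def by simp
  qed
  define g where "g z = (\<Sum>a\<in>Vc coal i. f a (x0 + (z - ys i) *\<^sub>R ind))" for z
  have dg: "(g has_field_derivative (\<Sum>a\<in>Vc coal i. inner ind (grad (f a) x0))) (at (ys i))"
    unfolding g_def by (rule DERIV_sum) (rule der_a)
  have gc: "g z = gcost coal f i (ys(i := z))" for z
    unfolding g_def gcost_def st ..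
  have min: "\<forall>y. \<bar>ys i - y\<bar> < 1 \<longrightarrow> g (ys i) \<le> g y"
  proof (intro allI impI)
    fix y
    have "g (ys i) = gcost coal f i ys" unfolding gc by simp
    also have "\<dots> \<le> gcost coal f i (ys(i := y))" using NE unfolding nash_eq_def by blast
    finally show "g (ys i) \<le> g y" unfolding gc .
  qed
  have z: "(\<Sum>a\<in>Vc coal i. inner ind (grad (f a) x0)) = 0"
    by (rule DERIV_local_min[OF dg zero_less_one min])
  have ip: "inner ind D = (\<Sum>m\<in>Vc coal i. D $ m)" for D :: "real^'a"
  proof -
    have "inner ind D = (\<Sum>m\<in>UNIV. if coal m = i then D $ m else 0)"
      unfolding ind_def inner_vec_def by (intro sum.cong) auto
    also have "\<dots> = (\<Sum>m\<in>{m \<in> UNIV. coal m = i}. D $ m)"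
      by (rule sum.inter_filter[symmetric]) simp
    finally show ?thesis by (simp add: Vc_def)
  qed
  show ?thesis using z unfolding ip x0_def .
qed

lemma tracking:
  assumes traj: "trajectory coal E r c f \<alpha> xs xi psi" and wC: "weights_C coal E c"
  shows "(\<Sum>j\<in>Vc coal (coal l). psi k j l) = (\<Sum>j\<in>Vc coal (coal l). pderiv (f j) (xi k j) l)"
proof (induction k)
  case 0
  show ?case using traj unfolding trajectory_def Vc_def by (intro sum.cong refl) auto
next
  case (Suc k)
  let ?V = "Vc coal (coal l)"
  have VV: "Vc coal (coal j) = ?V" if "j \<in> ?V" for j using that by (simp add: Vc_def)
  have "(\<Sum>j\<in>?V. psi (Suc k) j l) = (\<Sum>j\<in>?V. (\<Sum>m\<in>?V. c j m * psi k m l)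
        + pderiv (f j) (xi (Suc k) j) l - pderiv (f j) (xi k j) l)"
    using traj VV unfolding trajectory_def by (intro sum.cong refl) (auto simp: Vc_def)
  also have "\<dots> = (\<Sum>j\<in>?V. \<Sum>m\<in>?V. c j m * psi k m l)
        + (\<Sum>j\<in>?V. pderiv (f j) (xi (Suc k) j) l) - (\<Sum>j\<in>?V. pderiv (f j) (xi k j) l)"
    by (simp add: sum.distrib sum_subtractf)
  also have "(\<Sum>j\<in>?V. \<Sum>m\<in>?V. c j m * psi k m l) = (\<Sum>m\<in>?V. (\<Sum>j\<in>?V. c j m) * psi k m l)"
    by (subst sum.swap) (simp add: sum_distrib_right)
  also have "\<dots> = (\<Sum>m\<in>?V. psi k m l)"
  proof (intro sum.cong refl)
    fix m assume "m \<in> ?V"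
    hence "(\<Sum>j\<in>?V. c j m) = 1" using wC VV[of m] unfolding weights_C_def by metis
    thus "(\<Sum>j\<in>?V. c j m) * psi k m l = psi k m l" by simp
  qed
  also have "\<dots> = (\<Sum>j\<in>?V. pderiv (f j) (xi k j) l)" by (rule Suc)
  finally show ?case by simp
qed

lemma ex_next:
  fixes coal :: "'a::finite \<Rightarrow> 'c"
  assumes traj: "trajectory coal E r c f \<alpha> xs xi psi" and wR: "weights_R coal E r"
    and u: "left_perron coal r u"
    and ne: "Vc coal i \<noteq> {}" and j: "j \<in> Vc coal i"
  shows "e_x coal u (xs (Suc k)) j = mv (Vc coal i) (Rbar coal r u) (e_x coal u (xs k)) j
           - (\<alpha> / real (nc coal i)) * mv (Vc coal i) (Ibar coal u) (\<lambda>m. \<Sum>q\<in>Vc coal i. psi k m q) j"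
proof -
  let ?S = "Vc coal i"
  define n where "n = real (nc coal i)"
  have npos: "n > 0" unfolding n_def nc_def using ne by (simp add: card_gt_0_iff)
  define x where "x = xs k"
  define s where "s m = (\<Sum>q\<in>?S. psi k m q)" for m
  define \<beta> where "\<beta> = \<alpha> / n"
  define xb where "xb = xbar coal u x i"
  have inS: "coal m = i" if "m \<in> ?S" for m using that by (simp add: Vc_def)
  have cj: "coal j = i" using inS[OF j] .
  have x': "xs (Suc k) $ m = (\<Sum>q\<in>?S. r m q * x $ q) - \<beta> * s m" if "m \<in> ?S" for m
    using traj inS[OF that] unfolding trajectory_def x_def s_def \<beta>_def n_def by simp
  have rsum: "(\<Sum>q\<in>?S. r m q) = 1" if "m \<in> ?S" for m
    using wR inS[OF that] unfolding weights_R_def by metis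
  have ucol: "(\<Sum>m\<in>?S. u m * r m q) = u q" if "q \<in> ?S" for q
    using u inS[OF that] unfolding left_perron_def by metis
  have usum: "(\<Sum>m\<in>?S. u m) = n" using u unfolding left_perron_def n_def by blast
  have xbdef: "xb = (\<Sum>m\<in>?S. u m * x $ m) / n" unfolding xb_def xbar_def n_def ..
  have "(\<Sum>m\<in>?S. u m * xs (Suc k) $ m) = (\<Sum>m\<in>?S. u m * (\<Sum>q\<in>?S. r m q * x $ q) - \<beta> * (u m * s m))"
    by (intro sum.cong refl) (simp add: x' algebra_simps)
  also have "\<dots> = (\<Sum>m\<in>?S. u m * (\<Sum>q\<in>?S. r m q * x $ q)) - \<beta> * (\<Sum>m\<in>?S. u m * s m)"
    by (simp add: sum_subtractf sum_distrib_left)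
  also have "(\<Sum>m\<in>?S. u m * (\<Sum>q\<in>?S. r m q * x $ q)) = (\<Sum>m\<in>?S. \<Sum>q\<in>?S. u m * r m q * x $ q)"
    by (simp add: sum_distrib_left mult_ac)
  also have "\<dots> = (\<Sum>q\<in>?S. \<Sum>m\<in>?S. u m * r m q * x $ q)" by (rule sum.swap)
  also have "\<dots> = (\<Sum>q\<in>?S. u q * x $ q)"
  proof (intro sum.cong refl)
    fix q assume "q \<in> ?S"
    have "(\<Sum>m\<in>?S. u m * r m q * x $ q) = (\<Sum>m\<in>?S. u m * r m q) * x $ q" by (simp add: sum_distrib_right)
    thus "(\<Sum>m\<in>?S. u m * r m q * x $ q) = u q * x $ q" using ucol[OF \<open>q \<in> ?S\<close>] by simp
  qed
  finally have xb': "xbar coal u (xs (Suc k)) i = xb - \<beta> * (\<Sum>m\<in>?S. u m * s m) / n"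
    unfolding xbdef xbar_def n_def[symmetric] by (simp add: diff_divide_distrib)
  have lhs: "e_x coal u (xs (Suc k)) j = (\<Sum>q\<in>?S. r j q * x $ q) - \<beta> * s j - xb + \<beta> * (\<Sum>m\<in>?S. u m * s m) / n"
    unfolding e_x_def cj xb' x'[OF j] by simp
  have "mv ?S (Rbar coal r u) (e_x coal u x) j
      = (\<Sum>q\<in>?S. r j q * x $ q - xb * r j q - u q * x $ q / n + xb * u q / n)"
    unfolding mv_def Rbar_def e_x_def cj n_def[symmetric]
    by (intro sum.cong refl) (auto simp: inS xb_def algebra_simps diff_divide_distrib add_divide_distrib)
  also have "\<dots> = (\<Sum>q\<in>?S. r j q * x $ q) - xb * (\<Sum>q\<in>?S. r j q) - (\<Sum>q\<in>?S. u q * x $ q) / n + xb * (\<Sum>q\<in>?S. u q) / n"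
    by (simp add: sum.distrib sum_subtractf sum_distrib_left sum_divide_distrib)
  finally have mvR: "mv ?S (Rbar coal r u) (e_x coal u x) j = (\<Sum>q\<in>?S. r j q * x $ q) - xb"
    using rsum[OF j] usum xbdef npos by simp
  have "mv ?S (Ibar coal u) s j = (\<Sum>q\<in>?S. (if j = q then s q else 0) - u q * s q / n)"
    unfolding mv_def Ibar_def cj n_def[symmetric] by (intro sum.cong refl) (auto simp: algebra_simps)
  also have "\<dots> = s j - (\<Sum>q\<in>?S. u q * s q) / n"
    using j by (simp add: sum_subtractf sum_divide_distrib)
  finally have mvI: "mv ?S (Ibar coal u) s j = s j - (\<Sum>q\<in>?S. u q * s q) / n" .
  show ?thesis
    unfolding lhs x_def[symmetric] mvR s_def[symmetric] mvI n_def[symmetric] \<beta>_def[symmetric]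
    by (simp add: algebra_simps)
qed

lemma norm_sq_vec: "(norm (w::real^'n))\<^sup>2 = (\<Sum>m\<in>UNIV. (w $ m)\<^sup>2)"
  unfolding power2_norm_eq_inner inner_vec_def by (simp add: power2_eq_square)

lemma Dsq_bound:
  fixes coal :: "'a::finite \<Rightarrow> 'c::finite"
  assumes d: "\<delta> > 0"
  shows "(norm (z - stackc coal ys))\<^sup>2 \<le> (1 + \<delta>) * (\<Sum>pq\<in>UNIV. (z $ pq - xb (coal pq))\<^sup>2)
          + (1 + 1/\<delta>) * (\<Sum>pq\<in>UNIV. (xb (coal pq) - ys (coal pq))\<^sup>2)"
proof -
  have "(norm (z - stackc coal ys))\<^sup>2 = (\<Sum>pq\<in>UNIV. ((z $ pq - xb (coal pq)) + (xb (coal pq) - ys (coal pq)))\<^sup>2)"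
    unfolding norm_sq_vec stackc_def by simp
  also have "\<dots> \<le> (\<Sum>pq\<in>UNIV. (1 + \<delta>) * (z $ pq - xb (coal pq))\<^sup>2 + (1 + 1/\<delta>) * (xb (coal pq) - ys (coal pq))\<^sup>2)"
    by (intro sum_mono young_eps d)
  also have "\<dots> = (1 + \<delta>) * (\<Sum>pq\<in>UNIV. (z $ pq - xb (coal pq))\<^sup>2)
          + (1 + 1/\<delta>) * (\<Sum>pq\<in>UNIV. (xb (coal pq) - ys (coal pq))\<^sup>2)"
    by (simp add: sum.distrib sum_distrib_left)
  finally show ?thesis .
qed

lemma coal_sum_bound:
  fixes coal :: "'a::finite \<Rightarrow> 'c::finite" and F :: "'c \<Rightarrow> real"
  assumes F: "\<And>i. F i \<ge> 0"
  shows "(\<Sum>pq\<in>UNIV. F (coal pq)) \<le> real (Max (range (nc coal))) * (\<Sum>i\<in>UNIV. F i)"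
proof -
  have "(\<Sum>pq\<in>UNIV. F (coal pq)) = (\<Sum>i\<in>UNIV. \<Sum>pq\<in>Vc coal i. F (coal pq))" by (rule sum_group_coal)
  also have "\<dots> = (\<Sum>i\<in>UNIV. real (nc coal i) * F i)"
    by (intro sum.cong refl) (simp add: Vc_def nc_def)
  also have "\<dots> \<le> (\<Sum>i\<in>UNIV. real (Max (range (nc coal))) * F i)"
    by (intro sum_mono mult_right_mono F) simp
  finally show ?thesis by (simp add: sum_distrib_left)
qed

lemma s_bound:
  fixes coal :: "'a::finite \<Rightarrow> 'c::finite"
  assumes ne: "\<And>i. Vc coal i \<noteq> {}"
    and C2: "\<And>a. C2 (f a)" and lip: "\<And>a. grad_lipschitz (f a) (l a)"
    and NE: "nash_eq coal f ys" and wC: "weights_C coal E c"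
    and traj: "trajectory coal E r c f \<alpha> xs xi psi"
  shows "sqs (Vc coal i) (\<lambda>m. \<Sum>q\<in>Vc coal i. psi k m q) \<le> b0 coal v l i *
     ((\<Sum>j\<in>Vc coal i. \<Sum>m\<in>Vc coal i. (psi k j m - v j * psibar coal (psi k) m)\<^sup>2)
      + ((\<Sum>j\<in>Vc coal i. \<Sum>pq\<in>UNIV. (xi k j $ pq - xbar coal u (xs k) (coal pq))\<^sup>2)
         + e_xbar_sq coal u (xs k) ys))"
proof -
  let ?S = "Vc coal i"
  define n where "n = real (nc coal i)"
  have npos: "n > 0" unfolding n_def nc_def using ne[of i] by (simp add: card_gt_0_iff)
  have ncard: "n = real (card ?S)" unfolding n_def nc_def ..
  define Mx where "Mx = real (Max (range (nc coal)))"
  have Mxn: "Mx \<ge> n" unfolding Mx_def n_def by simp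
  have inS: "coal m = i" if "m \<in> ?S" for m using that by (simp add: Vc_def)
  define pb where "pb m = psibar coal (psi k) m" for m
  define A where "A j = (\<Sum>m\<in>?S. psi k j m - v j * pb m)" for j
  define T where "T = (\<Sum>m\<in>?S. pb m)"
  define P where "P = (\<Sum>j\<in>?S. \<Sum>m\<in>?S. (psi k j m - v j * pb m)\<^sup>2)"
  define Xi where "Xi = (\<Sum>j\<in>?S. \<Sum>pq\<in>UNIV. (xi k j $ pq - xbar coal u (xs k) (coal pq))\<^sup>2)"
  define Xb where "Xb = e_xbar_sq coal u (xs k) ys"
  define L where "L = (\<Sum>j\<in>?S. (l j)\<^sup>2)"
  define K where "K = (1/n + Mx) * sqs ?S v * L"
  have b0eq: "b0 coal v l i = n + K"
    unfolding b0_def K_def n_def Mx_def sqs_def L_def by simp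
  have Xb0: "Xb \<ge> 0" unfolding Xb_def e_xbar_sq_def by (simp add: sum_nonneg)
  have Xi0: "Xi \<ge> 0" unfolding Xi_def by (simp add: sum_nonneg)
  have P0: "P \<ge> 0" unfolding P_def by (simp add: sum_nonneg)
  have L0: "L \<ge> 0" unfolding L_def by (simp add: sum_nonneg)
  have Mx0: "Mx \<ge> 0" unfolding Mx_def by simp
  have K0: "K \<ge> 0" unfolding K_def using npos Mx0 L0 sqs_nonneg[of ?S v] by simp
  have sdec: "(\<Sum>q\<in>?S. psi k j q) = A j + v j * T" for j
    unfolding A_def T_def by (simp add: sum_subtractf sum_distrib_left)
  have hA: "sqs ?S A \<le> n * P"
  proof -
    have "sqs ?S A \<le> (\<Sum>j\<in>?S. n * (\<Sum>m\<in>?S. (psi k j m - v j * pb m)\<^sup>2))"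
      unfolding sqs_def A_def ncard by (intro sum_mono sum_sq_card)
    thus ?thesis unfolding P_def by (simp add: sum_distrib_left)
  qed
  define x0 where "x0 = stackc coal ys"
  define d where "d j = (\<Sum>m\<in>?S. grad (f j) (xi k j) $ m - grad (f j) x0 $ m)" for j
  define D where "D j = norm (xi k j - x0)" for j
  have Tsum: "T = (\<Sum>j\<in>?S. d j) / n"
  proof -
    have "T = (\<Sum>m\<in>?S. (\<Sum>j\<in>?S. grad (f j) (xi k j) $ m) / n)"
      unfolding T_def
    proof (intro sum.cong refl)
      fix m assume m: "m \<in> ?S"
      have "pb m = (\<Sum>j\<in>Vc coal (coal m). psi k j m) / real (nc coal (coal m))"
        unfolding pb_def psibar_def ..
      also have "\<dots> = (\<Sum>j\<in>Vc coal (coal m). pderiv (f j) (xi k j) m) / real (nc coal (coal m))"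
        using tracking[OF traj wC] by simp
      finally show "pb m = (\<Sum>j\<in>?S. grad (f j) (xi k j) $ m) / n"
        unfolding pderiv_def n_def inS[OF m] .
    qed
    also have "\<dots> = (\<Sum>j\<in>?S. \<Sum>m\<in>?S. grad (f j) (xi k j) $ m) / n"
      by (simp only: sum_divide_distrib[symmetric]) (rule arg_cong[where f="\<lambda>t. t / n"], rule sum.swap)
    also have "(\<Sum>j\<in>?S. \<Sum>m\<in>?S. grad (f j) (xi k j) $ m)
        = (\<Sum>j\<in>?S. \<Sum>m\<in>?S. grad (f j) (xi k j) $ m) - (\<Sum>j\<in>?S. \<Sum>m\<in>?S. grad (f j) x0 $ m)"
      using nash_grad[OF NE C2, of i] unfolding x0_def by simp
    also have "\<dots> = (\<Sum>j\<in>?S. d j)" unfolding d_def by (simp add: sum_subtractf)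
    finally show ?thesis .
  qed
  have dj: "(d j)\<^sup>2 \<le> n * (l j)\<^sup>2 * (D j)\<^sup>2" if "j \<in> ?S" for j
  proof -
    define w where "w = grad (f j) (xi k j) - grad (f j) x0"
    have "(d j)\<^sup>2 \<le> n * (\<Sum>m\<in>?S. (w $ m)\<^sup>2)"
      unfolding d_def w_def ncard by (simp add: sum_sq_card)
    also have "(\<Sum>m\<in>?S. (w $ m)\<^sup>2) \<le> (\<Sum>m\<in>UNIV. (w $ m)\<^sup>2)"
      by (intro sum_mono2) auto
    also have "\<dots> = (norm w)\<^sup>2" by (rule norm_sq_vec[symmetric])
    also have "\<dots> \<le> (l j * D j)\<^sup>2"
    proof -
      have "norm w \<le> l j * D j" using lip[of j] unfolding grad_lipschitz_def w_def D_def by blast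
      thus ?thesis by (intro power_mono) auto
    qed
    finally show ?thesis using npos by (simp add: power_mult_distrib mult_left_mono mult_ac)
  qed
  have "(\<Sum>j\<in>?S. d j)\<^sup>2 \<le> n * L * (\<Sum>j\<in>?S. (D j)\<^sup>2)"
    unfolding L_def by (rule sum_sq_bound) (use npos dj in auto)
  moreover have "(\<Sum>j\<in>?S. (D j)\<^sup>2) \<le> (1 + n * Mx) * (Xi + Xb)"
  proof -
    define \<delta> where "\<delta> = n * Mx"
    have dp: "\<delta> > 0" unfolding \<delta>_def using npos Mxn by (simp add: mult_pos_pos)
    define F where "F i' = (xbar coal u (xs k) i' - ys i')\<^sup>2" for i'
    have "(\<Sum>j\<in>?S. (D j)\<^sup>2) \<le> (\<Sum>j\<in>?S. (1 + \<delta>) * (\<Sum>pq\<in>UNIV. (xi k j $ pq - xbar coal u (xs k) (coal pq))\<^sup>2)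
          + (1 + 1/\<delta>) * (\<Sum>pq\<in>UNIV. F (coal pq)))"
      unfolding D_def x0_def F_def by (intro sum_mono Dsq_bound dp)
    also have "\<dots> = (1 + \<delta>) * Xi + (1 + 1/\<delta>) * n * (\<Sum>pq\<in>UNIV. F (coal pq))"
      unfolding Xi_def ncard by (simp add: sum.distrib sum_distrib_left mult_ac)
    also have "\<dots> \<le> (1 + \<delta>) * Xi + (1 + 1/\<delta>) * n * (Mx * Xb)"
    proof -
      have "(\<Sum>pq\<in>UNIV. F (coal pq)) \<le> Mx * Xb"
        unfolding Mx_def Xb_def e_xbar_sq_def F_def by (rule coal_sum_bound) simp
      moreover have "(1 + 1/\<delta>) * n \<ge> 0" using dp npos by simp
      ultimately show ?thesis by (intro add_left_mono mult_left_mono) auto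
    qed
    also have "\<dots> = (1 + n * Mx) * (Xi + Xb)"
      unfolding \<delta>_def using npos dp Mxn unfolding \<delta>_def by (simp add: field_simps)
    finally show ?thesis .
  qed
  ultimately have "(\<Sum>j\<in>?S. d j)\<^sup>2 \<le> n * L * ((1 + n * Mx) * (Xi + Xb))"
  proof -
    assume a1: "(\<Sum>j\<in>?S. d j)\<^sup>2 \<le> n * L * (\<Sum>j\<in>?S. (D j)\<^sup>2)"
      and a2: "(\<Sum>j\<in>?S. (D j)\<^sup>2) \<le> (1 + n * Mx) * (Xi + Xb)"
    have "0 \<le> n * L" using npos L0 by simp
    from mult_left_mono[OF a2 this] a1 show ?thesis by linarith
  qed
  hence "T\<^sup>2 \<le> n * L * ((1 + n * Mx) * (Xi + Xb)) / n\<^sup>2"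
    unfolding Tsum by (simp add: power_divide divide_right_mono)
  also have "\<dots> = (1/n + Mx) * L * (Xi + Xb)"
    using npos by (simp add: field_simps power2_eq_square)
  finally have hT0: "T\<^sup>2 \<le> (1/n + Mx) * L * (Xi + Xb)" .
  have hT: "T\<^sup>2 * sqs ?S v \<le> K * (Xi + Xb)"
  proof -
    have "T\<^sup>2 * sqs ?S v \<le> (1/n + Mx) * L * (Xi + Xb) * sqs ?S v"
      using hT0 sqs_nonneg[of ?S v] by (rule mult_right_mono)
    thus ?thesis unfolding K_def by (simp add: mult_ac)
  qed
  have "sqs ?S (\<lambda>m. \<Sum>q\<in>?S. psi k m q) \<le> (n + K) * (P + (Xi + Xb))"
    by (rule sbound_combine[OF _ npos _ hA hT K0 P0]) (use sdec Xi0 Xb0 in auto)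
  thus ?thesis unfolding b0eq P_def Xi_def Xb_def pb_def .
qed

theorem lemma4:
  fixes coal :: "'a::finite \<Rightarrow> 'c::finite"
    and E :: "('a \<times> 'a) set"
    and f :: "'a \<Rightarrow> real^'a \<Rightarrow> real"
    and l :: "'a \<Rightarrow> real"
    and ys :: "'c \<Rightarrow> real"
    and r c :: "'a \<Rightarrow> 'a \<Rightarrow> real"
    and u v :: "'a \<Rightarrow> real"
    and W :: "'a \<Rightarrow> 'a \<Rightarrow> real"
    and \<alpha> :: real
    and xs :: "nat \<Rightarrow> real^'a"
    and xi :: "nat \<Rightarrow> 'a \<Rightarrow> real^'a"
    and psi :: "nat \<Rightarrow> 'a \<Rightarrow> 'a \<Rightarrow> real"
    and k :: nat
  assumes coal_nonempty: "\<And>i. Vc coal i \<noteq> {}"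
    and A1: "strongly_connected_on UNIV E" "\<And>i. strongly_connected_on (Vc coal i) E"
    and A2: "\<And>a. convex_on UNIV (f a)" "\<And>a. C2 (f a)" "\<And>a. grad_lipschitz (f a) (l a)"
    and NE: "nash_eq coal f ys"
    and wR: "weights_R coal E r" and wC: "weights_C coal E c"
    and alpha: "\<alpha> > 0"
    and traj: "trajectory coal E r c f \<alpha> xs xi psi"
    and u: "left_perron coal r u" and v: "right_perron coal c v"
    and W: "lyap_sol coal r u W"
  shows "Vx coal u W (xs (Suc k)) - Vx coal u W (xs k)
     \<le> - (1/2) * (\<Sum>j\<in>UNIV. (e_x coal u (xs k) j)\<^sup>2)
       + \<alpha>\<^sup>2 * Max (range (b3 coal r u v W l))
         * (e_psi_sq coal v (psi k) + e_xi_sq coal u (xs k) (xi k)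
            + real CARD('c) * e_xbar_sq coal u (xs k) ys)"
proof -
  define Mb where "Mb = Max (range (b3 coal r u v W l))"
  define e where "e = e_x coal u (xs k)"
  define e' where "e' = e_x coal u (xs (Suc k))"
  define Xb where "Xb = e_xbar_sq coal u (xs k) ys"
  define P where "P i = (\<Sum>j\<in>Vc coal i. \<Sum>m\<in>Vc coal i. (psi k j m - v j * psibar coal (psi k) m)\<^sup>2)" for i
  define Xi where "Xi i = (\<Sum>j\<in>Vc coal i. \<Sum>pq\<in>UNIV. (xi k j $ pq - xbar coal u (xs k) (coal pq))\<^sup>2)" for i
  have Xb0: "Xb \<ge> 0" unfolding Xb_def e_xbar_sq_def by (simp add: sum_nonneg)
  have per: "bil (Vc coal i) W e' e' - bil (Vc coal i) W e e
      \<le> - (1/2) * sqs (Vc coal i) e + \<alpha>\<^sup>2 * Mb * (P i + (Xi i + Xb))" for i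
  proof -
    let ?S = "Vc coal i"
    define n where "n = real (nc coal i)"
    have npos: "n > 0" unfolding n_def nc_def using coal_nonempty[of i] by (simp add: card_gt_0_iff)
    define s where "s m = (\<Sum>q\<in>?S. psi k m q)" for m
    define CC where "CC = 2 * (specnorm ?S (tmul3 ?S (Rbar coal r u) W (Ibar coal u)))\<^sup>2
        + specnorm ?S (tmul3 ?S (Ibar coal u) W (Ibar coal u))"
    have CC0: "CC \<ge> 0" unfolding CC_def using specnorm_props(1)[of ?S] by (simp add: add_nonneg_nonneg)
    have Z0: "P i + (Xi i + Xb) \<ge> 0" unfolding P_def Xi_def using Xb0 by (simp add: sum_nonneg)
    have q: "bil ?S W e' e' - bil ?S W e e \<le> - (1/2) * sqs ?S e + (\<alpha> / n)\<^sup>2 * CC * sqs ?S s"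
      unfolding CC_def
    proof (rule step_quad)
      show "finite ?S" by simp
      show "W j m = W m j" if "j \<in> ?S" "m \<in> ?S" for j m
        using W that unfolding lyap_sol_def by blast
      show "tmul3 ?S (Rbar coal r u) W (Rbar coal r u) j m - W j m = - (if j = m then 1 else 0)"
        if "j \<in> ?S" "m \<in> ?S" for j m
        using W that unfolding lyap_sol_def tmul3_def by blast
      show "e' j = mv ?S (Rbar coal r u) e j - \<alpha> / n * mv ?S (Ibar coal u) s j" if "j \<in> ?S" for j
        unfolding e'_def e_def s_def n_def by (rule ex_next[OF traj wR u coal_nonempty that])
    qed
    have sb: "sqs ?S s \<le> b0 coal v l i * (P i + (Xi i + Xb))"
      unfolding s_def P_def Xi_def Xb_def by (rule s_bound[OF coal_nonempty A2(2,3) NE wC traj])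
    have "(\<alpha> / n)\<^sup>2 * CC * sqs ?S s \<le> (\<alpha> / n)\<^sup>2 * CC * (b0 coal v l i * (P i + (Xi i + Xb)))"
      using sb CC0 by (intro mult_left_mono) auto
    also have "\<dots> = \<alpha>\<^sup>2 * b3 coal r u v W l i * (P i + (Xi i + Xb))"
      unfolding b3_def CC_def n_def by (simp add: power_divide field_simps)
    also have "\<dots> \<le> \<alpha>\<^sup>2 * Mb * (P i + (Xi i + Xb))"
    proof -
      have "b3 coal r u v W l i \<le> Mb" unfolding Mb_def by (rule Max_ge) auto
      thus ?thesis using Z0 by (intro mult_right_mono mult_left_mono) auto
    qed
    finally show ?thesis using q by linarith
  qed
  have "Vx coal u W (xs (Suc k)) - Vx coal u W (xs k) = (\<Sum>i\<in>UNIV. bil (Vc coal i) W e' e' - bil (Vc coal i) W e e)"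
    unfolding Vx_def bil_def e_def e'_def by (simp add: sum_subtractf)
  also have "\<dots> \<le> (\<Sum>i\<in>UNIV. - (1/2) * sqs (Vc coal i) e + \<alpha>\<^sup>2 * Mb * (P i + (Xi i + Xb)))"
    by (intro sum_mono per)
  also have "\<dots> = - (1/2) * (\<Sum>i\<in>UNIV. sqs (Vc coal i) e)
      + \<alpha>\<^sup>2 * Mb * ((\<Sum>i\<in>UNIV. P i) + (\<Sum>i\<in>UNIV. Xi i) + real CARD('c) * Xb)"
  proof -
    have "(\<Sum>i\<in>UNIV. - (1/2) * sqs (Vc coal i) e + \<alpha>\<^sup>2 * Mb * (P i + (Xi i + Xb)))
        = (\<Sum>i\<in>UNIV. (- (1/2)) * sqs (Vc coal i) e + ((\<alpha>\<^sup>2 * Mb) * P i + ((\<alpha>\<^sup>2 * Mb) * Xi i + (\<alpha>\<^sup>2 * Mb * Xb))))"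
      by (intro sum.cong refl) (simp add: algebra_simps)
    also have "\<dots> = (- (1/2)) * (\<Sum>i\<in>UNIV. sqs (Vc coal i) e) + ((\<alpha>\<^sup>2 * Mb) * (\<Sum>i\<in>UNIV. P i)
        + ((\<alpha>\<^sup>2 * Mb) * (\<Sum>i\<in>UNIV. Xi i) + \<alpha>\<^sup>2 * Mb * (real CARD('c) * Xb)))"
      by (simp only: sum.distrib sum_distrib_left[symmetric] sum_constant)
    finally show ?thesis by (simp add: algebra_simps)
  qed
  also have "(\<Sum>i\<in>UNIV. sqs (Vc coal i) e) = (\<Sum>j\<in>UNIV. (e j)\<^sup>2)"
    unfolding sqs_def by (rule sum_group_coal[symmetric])
  also have "(\<Sum>i\<in>UNIV. P i) = e_psi_sq coal v (psi k)"
  proof -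
    have "e_psi_sq coal v (psi k) = (\<Sum>i\<in>UNIV. \<Sum>j\<in>Vc coal i. \<Sum>l\<in>Vc coal (coal j). (psi k j l - v j * psibar coal (psi k) l)\<^sup>2)"
      unfolding e_psi_sq_def by (rule sum_group_coal)
    also have "\<dots> = (\<Sum>i\<in>UNIV. P i)" unfolding P_def
      by (intro sum.cong refl) (simp add: Vc_def)
    finally show ?thesis by simp
  qed
  also have "(\<Sum>i\<in>UNIV. Xi i) = e_xi_sq coal u (xs k) (xi k)"
    unfolding e_xi_sq_def Xi_def by (rule sum_group_coal[symmetric])
  finally show ?thesis unfolding Mb_def e_def Xb_def .
qed

end
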